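(* Let $k$ be an algebraically closed field of characteristic zero and $0<l<n$. Let $Y,Z\subset\mathbb P^n$ be closed subvarieties with saturated homogeneous ideals $I_Y,I_Z\subset k[x_0,\dots,x_n]$, and let $X$ be defined by $I_X=I_Y\cap I_Z$. Suppose $Y\subset\{x_0=\cdots=x_{l-1}=0\}$ and $Z\subset\{x_{l+1}=\cdots=x_n=0\}$, and that $Y\cap Z\neq\emptyset$, so that $Y\cap Z=\{p\}$ where $p$ is the point whose only nonzero coordinate is $x_l$. Then for every monomial order $\prec$ on $k[x_0,\dots,x_n]$, \[ \mathrm{in}_\prec(I_X)=\langle\mathrm{in}_\prec(I_Y\cap k[x_l,\dots,x_n])\rangle+\langle\mathrm{in}_\prec(I_Z\cap k[x_0,\dots,x_l])\rangle+T, \] where $T=\langle x_0,\dots,x_{l-1}\rangle\langle x_{l+1},\dots,x_n\rangle$, $\mathrm{in}_\prec(I_Y\cap k[x_l,\dots,x_n])$ is computed in $k[x_l,\dots,x_n]$ (with the restricted order) and $\langle\cdot\rangle$ denotes the ideal it generates in $k[x_0,\dots,x_n]$; similarly for $Z$. *)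

theory Defs
  imports "HOL-Computational_Algebra.Polynomial" "HOL-Library.Poly_Mapping"
begin

text \<open>Multivariate polynomials over 'a in the variables x_0, x_1, ... (indexed by nat):
  a monomial is an exponent vector (nat with finite support), a polynomial is a finitely
  supported map from monomials to coefficients (multiplication = convolution).\<close>

type_synonym monom = "nat \<Rightarrow>\<^sub>0 nat"
type_synonym 'a mpol = "monom \<Rightarrow>\<^sub>0 'a"

definition Var :: "nat \<Rightarrow> 'a::{zero,one} mpol" where
  "Var i = Poly_Mapping.single (Poly_Mapping.single i 1) 1"

definition poly_in :: "nat set \<Rightarrow> 'a::zero mpol \<Rightarrow> bool" where
  "poly_in V f \<longleftrightarrow> (\<forall>m\<in>Poly_Mapping.keys f. Poly_Mapping.keys m \<subseteq> V)"

definition polyring :: "nat \<Rightarrow> 'a::zero mpol set" where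
  "polyring n = {f. poly_in {0..n} f}"

definition mdeg :: "monom \<Rightarrow> nat" where
  "mdeg m = (\<Sum>i\<in>Poly_Mapping.keys m. Poly_Mapping.lookup m i)"

definition homogeneous :: "'a::zero mpol \<Rightarrow> bool" where
  "homogeneous f \<longleftrightarrow> (\<exists>d. \<forall>m\<in>Poly_Mapping.keys f. mdeg m = d)"

definition eval :: "'a::comm_semiring_1 mpol \<Rightarrow> (nat \<Rightarrow> 'a) \<Rightarrow> 'a" where
  "eval f v = (\<Sum>m\<in>Poly_Mapping.keys f. Poly_Mapping.lookup f m * (\<Prod>i\<in>Poly_Mapping.keys m. v i ^ Poly_Mapping.lookup m i))"

text \<open>Points of P^n, represented by their (nonzero) homogeneous coordinate vectors
  (v_0,...,v_n); a subset of P^n is represented by the set of all its coordinate vectors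
  (its affine cone minus the origin).\<close>
definition proj_pts :: "nat \<Rightarrow> (nat \<Rightarrow> 'a::zero) set" where
  "proj_pts n = {v. (\<forall>i>n. v i = 0) \<and> v \<noteq> (\<lambda>_. 0)}"

definition proj_closed :: "nat \<Rightarrow> (nat \<Rightarrow> 'a::comm_semiring_1) set \<Rightarrow> bool" where
  "proj_closed n Y \<longleftrightarrow> (\<exists>S. S \<subseteq> polyring n \<and> (\<forall>f\<in>S. homogeneous f) \<and>
      Y = {v\<in>proj_pts n. \<forall>f\<in>S. eval f v = 0})"

definition vanishing_ideal :: "nat \<Rightarrow> (nat \<Rightarrow> 'a::comm_semiring_1) set \<Rightarrow> 'a mpol set" where
  "vanishing_ideal n Y = {f\<in>polyring n. \<forall>v\<in>Y. eval f v = 0}"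

definition is_ideal :: "nat \<Rightarrow> 'a::comm_ring_1 mpol set \<Rightarrow> bool" where
  "is_ideal n J \<longleftrightarrow> J \<subseteq> polyring n \<and> 0 \<in> J \<and> (\<forall>a\<in>J. \<forall>b\<in>J. a + b \<in> J) \<and>
      (\<forall>a\<in>J. \<forall>r\<in>polyring n. r * a \<in> J)"

definition ideal_gen :: "nat \<Rightarrow> 'a::comm_ring_1 mpol set \<Rightarrow> 'a mpol set" where
  "ideal_gen n G = \<Inter>{J. is_ideal n J \<and> G \<subseteq> J}"

definition ideal_sum :: "nat \<Rightarrow> 'a::comm_ring_1 mpol set \<Rightarrow> 'a mpol set \<Rightarrow> 'a mpol set" where
  "ideal_sum n A B = ideal_gen n (A \<union> B)"

definition ideal_prod :: "nat \<Rightarrow> 'a::comm_ring_1 mpol set \<Rightarrow> 'a mpol set \<Rightarrow> 'a mpol set" where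
  "ideal_prod n A B = ideal_gen n {a * b | a b. a \<in> A \<and> b \<in> B}"

definition monomial_order :: "nat \<Rightarrow> (monom \<Rightarrow> monom \<Rightarrow> bool) \<Rightarrow> bool" where
  "monomial_order n ord \<longleftrightarrow>
     (let M = {m. Poly_Mapping.keys m \<subseteq> {0..n}} in
       (\<forall>a\<in>M. ord a a) \<and>
       (\<forall>a\<in>M. \<forall>b\<in>M. ord a b \<and> ord b a \<longrightarrow> a = b) \<and>
       (\<forall>a\<in>M. \<forall>b\<in>M. \<forall>c\<in>M. ord a b \<and> ord b c \<longrightarrow> ord a c) \<and>
       (\<forall>a\<in>M. \<forall>b\<in>M. ord a b \<or> ord b a) \<and>
       (\<forall>a\<in>M. ord 0 a) \<and>
       (\<forall>a\<in>M. \<forall>b\<in>M. \<forall>c\<in>M. ord a b \<longrightarrow> ord (a + c) (b + c)))"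

definition lead_monom :: "(monom \<Rightarrow> monom \<Rightarrow> bool) \<Rightarrow> 'a::zero mpol \<Rightarrow> monom" where
  "lead_monom ord f = (THE m. m \<in> Poly_Mapping.keys f \<and> (\<forall>m'\<in>Poly_Mapping.keys f. ord m' m))"

definition initial_ideal ::
  "nat \<Rightarrow> (monom \<Rightarrow> monom \<Rightarrow> bool) \<Rightarrow> 'a::comm_ring_1 mpol set \<Rightarrow> 'a mpol set" where
  "initial_ideal n ord I =
     ideal_gen n {Poly_Mapping.single (lead_monom ord f) 1 | f. f \<in> I \<and> f \<noteq> 0}"

end

theory Submission
  imports Defs
begin


lemma polyring_iff: "f \<in> polyring n \<longleftrightarrow> (\<forall>m\<in>Poly_Mapping.keys f. Poly_Mapping.keys m \<subseteq> {0..n})"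
  by (simp add: polyring_def poly_in_def)

lemma keys_monom_add: "Poly_Mapping.keys ((a::monom) + b) \<subseteq> Poly_Mapping.keys a \<union> Poly_Mapping.keys b"
  by (rule keys_add)

lemma polyring_zero: "0 \<in> polyring n" by (simp add: polyring_iff)

lemma polyring_add: "a \<in> polyring n \<Longrightarrow> b \<in> polyring n \<Longrightarrow> a + b \<in> polyring n"
  unfolding polyring_iff using keys_add[of a b] by blast

lemma polyring_diff: "a \<in> polyring n \<Longrightarrow> b \<in> polyring n \<Longrightarrow> (a::'a::ab_group_add mpol) - b \<in> polyring n"
  unfolding polyring_iff using keys_diff[of a b] by blast

lemma polyring_mult: "a \<in> polyring n \<Longrightarrow> b \<in> polyring n \<Longrightarrow> (a::'a::comm_ring_1 mpol) * b \<in> polyring n"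
  unfolding polyring_iff
proof
  fix m assume a: "\<forall>m\<in>Poly_Mapping.keys a. Poly_Mapping.keys m \<subseteq> {0..n}"
    and b: "\<forall>m\<in>Poly_Mapping.keys b. Poly_Mapping.keys m \<subseteq> {0..n}"
    and m: "m \<in> Poly_Mapping.keys (a * b)"
  then obtain x y where "m = x + y" "x \<in> Poly_Mapping.keys a" "y \<in> Poly_Mapping.keys b"
    using keys_mult[of a b] by blast
  then show "Poly_Mapping.keys m \<subseteq> {0..n}" using a b keys_add[of x y] by blast
qed

lemma is_ideal_polyring: "is_ideal n (polyring n :: 'a::comm_ring_1 mpol set)"
  by (simp add: is_ideal_def polyring_zero polyring_add polyring_mult)

lemma ideal_gen_ideal:
  assumes "G \<subseteq> polyring n"
  shows "is_ideal n (ideal_gen n (G :: 'a::comm_ring_1 mpol set))"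
proof -
  let ?F = "{J. is_ideal n J \<and> G \<subseteq> J}"
  have ne: "polyring n \<in> ?F" using assms is_ideal_polyring by blast
  show ?thesis unfolding ideal_gen_def is_ideal_def[of n "\<Inter> ?F"]
  proof (intro conjI ballI)
    show "\<Inter> ?F \<subseteq> polyring n" using ne by blast
    show "0 \<in> \<Inter> ?F" by (auto simp: is_ideal_def)
  next
    fix a b :: "'a mpol" assume "a \<in> \<Inter> ?F" "b \<in> \<Inter> ?F"
    then show "a + b \<in> \<Inter> ?F" by (auto simp: is_ideal_def)
  next
    fix a r :: "'a mpol" assume "a \<in> \<Inter> ?F" "r \<in> polyring n"
    then show "r * a \<in> \<Inter> ?F" by (auto simp: is_ideal_def)
  qed
qed

lemma ideal_gen_sub: "G \<subseteq> polyring n \<Longrightarrow> G \<subseteq> ideal_gen n (G :: 'a::comm_ring_1 mpol set)"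
  by (auto simp: ideal_gen_def)

lemma ideal_gen_least: "is_ideal n J \<Longrightarrow> G \<subseteq> J \<Longrightarrow> ideal_gen n G \<subseteq> J"
  by (auto simp: ideal_gen_def)

lemma ideal_gen_poly: "G \<subseteq> polyring n \<Longrightarrow> ideal_gen n (G :: 'a::comm_ring_1 mpol set) \<subseteq> polyring n"
  using ideal_gen_ideal[of G n] by (simp add: is_ideal_def)

lemma is_ideal_mult: "is_ideal n J \<Longrightarrow> a \<in> J \<Longrightarrow> r \<in> polyring n \<Longrightarrow> r * a \<in> J"
  by (simp add: is_ideal_def)

lemma colon_ideal:
  assumes L: "is_ideal n L" and c: "c \<in> polyring n"
  shows "is_ideal n {x\<in>polyring n. x * c \<in> (L :: 'a::comm_ring_1 mpol set)}"
  unfolding is_ideal_def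
proof (intro conjI ballI)
  show "{x \<in> polyring n. x * c \<in> L} \<subseteq> polyring n" by blast
  show "0 \<in> {x \<in> polyring n. x * c \<in> L}" using L polyring_zero by (auto simp: is_ideal_def)
next
  fix a b :: "'a mpol" assume "a \<in> {x \<in> polyring n. x * c \<in> L}" "b \<in> {x \<in> polyring n. x * c \<in> L}"
  then show "a + b \<in> {x \<in> polyring n. x * c \<in> L}"
    using L unfolding is_ideal_def by (auto simp: distrib_right intro: polyring_add)
next
  fix a r :: "'a mpol" assume "a \<in> {x \<in> polyring n. x * c \<in> L}" "r \<in> polyring n"
  then show "r * a \<in> {x \<in> polyring n. x * c \<in> L}"
    using L unfolding is_ideal_def by (auto simp: mult.assoc intro: polyring_mult)
qed

lemma ideal_gen_prod:
  assumes L: "is_ideal n L" and A: "A \<subseteq> polyring n" and B: "B \<subseteq> polyring n"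
    and AB: "\<forall>x\<in>A. \<forall>y\<in>B. x * y \<in> (L :: 'a::comm_ring_1 mpol set)"
    and a: "a \<in> ideal_gen n A" and b: "b \<in> ideal_gen n B"
  shows "a * b \<in> L"
proof -
  have 1: "ideal_gen n A \<subseteq> {x\<in>polyring n. x * y \<in> L}" if y: "y \<in> B" for y
  proof (rule ideal_gen_least[OF colon_ideal[OF L]])
    show "y \<in> polyring n" using y B by blast
    show "A \<subseteq> {x \<in> polyring n. x * y \<in> L}" using A AB y by blast
  qed
  have "ideal_gen n B \<subseteq> {y\<in>polyring n. y * a \<in> L}"
    apply (rule ideal_gen_least[OF colon_ideal[OF L]])
    using ideal_gen_poly[OF A] a apply blast
  proof
    fix y assume y: "y \<in> B"
    then have "a * y \<in> L" using 1[OF y] a by blast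
    then show "y \<in> {y \<in> polyring n. y * a \<in> L}" using y B by (auto simp: mult.commute)
  qed
  with b show ?thesis by (auto simp: mult.commute)
qed



definition mval :: "monom \<Rightarrow> (nat \<Rightarrow> 'a::comm_semiring_1) \<Rightarrow> 'a" where
  "mval m v = (\<Prod>i\<in>Poly_Mapping.keys m. v i ^ Poly_Mapping.lookup m i)"

lemma eval_mval: "eval f v = (\<Sum>m\<in>Poly_Mapping.keys f. Poly_Mapping.lookup f m * mval m v)"
  by (simp add: eval_def mval_def)

lemma eval_superset:
  assumes "finite S" "Poly_Mapping.keys f \<subseteq> S"
  shows "eval f v = (\<Sum>m\<in>S. Poly_Mapping.lookup f m * mval m v)"
  unfolding eval_mval
  by (rule sum.mono_neutral_left) (use assms in \<open>auto simp: in_keys_iff\<close>)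

lemma eval_add: "eval (f + g) v = eval f v + eval g v"
proof -
  let ?S = "Poly_Mapping.keys f \<union> Poly_Mapping.keys g"
  have fin: "finite ?S" by simp
  have "eval (f + g) v = (\<Sum>m\<in>?S. Poly_Mapping.lookup (f + g) m * mval m v)"
    by (rule eval_superset[OF fin keys_add])
  also have "\<dots> = (\<Sum>m\<in>?S. Poly_Mapping.lookup f m * mval m v) + (\<Sum>m\<in>?S. Poly_Mapping.lookup g m * mval m v)"
    by (simp add: lookup_add distrib_right sum.distrib)
  also have "\<dots> = eval f v + eval g v"
    using eval_superset[OF fin, of f v] eval_superset[OF fin, of g v] by simp
  finally show ?thesis .
qed

lemma eval_diff: "eval (f - g) v = eval f v - eval (g :: 'a::comm_ring_1 mpol) v"
  using eval_add[of "f - g" g v] by simp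

lemma mval_zero: "i \<in> Poly_Mapping.keys m \<Longrightarrow> v i = 0 \<Longrightarrow> mval m v = 0"
  unfolding mval_def
  by (rule prod_zero) (auto simp: in_keys_iff zero_power intro!: bexI[of _ i])

lemma eval_zero_on:
  assumes "\<forall>m\<in>Poly_Mapping.keys f. \<exists>i\<in>Poly_Mapping.keys m. v i = 0"
  shows "eval f v = 0"
  unfolding eval_mval using assms mval_zero by (metis (no_types, lifting) mult_zero_right sum.neutral)

lemma eval_single: "eval (Poly_Mapping.single m c) v = c * mval m v"
  by (simp add: eval_mval)

lemma mo_M:
  assumes "monomial_order n ord"
  shows "\<And>a b. Poly_Mapping.keys a \<subseteq> {0..n} \<Longrightarrow> Poly_Mapping.keys b \<subseteq> {0..n} \<Longrightarrow> ord a b \<Longrightarrow> ord b a \<Longrightarrow> a = b"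
    and "\<And>a b c. Poly_Mapping.keys a \<subseteq> {0..n} \<Longrightarrow> Poly_Mapping.keys b \<subseteq> {0..n} \<Longrightarrow> Poly_Mapping.keys c \<subseteq> {0..n} \<Longrightarrow> ord a b \<Longrightarrow> ord b c \<Longrightarrow> ord a c"
    and "\<And>a b. Poly_Mapping.keys a \<subseteq> {0..n} \<Longrightarrow> Poly_Mapping.keys b \<subseteq> {0..n} \<Longrightarrow> ord a b \<or> ord b a"
  using assms unfolding monomial_order_def Let_def by blast+

lemma lead_monom_eqI:
  assumes mo: "monomial_order n ord" and f: "f \<in> polyring n"
    and m: "m \<in> Poly_Mapping.keys f" and mx: "\<forall>m'\<in>Poly_Mapping.keys f. ord m' m"
  shows "lead_monom ord f = m"
  unfolding lead_monom_def
proof (rule the_equality)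
  show "m \<in> Poly_Mapping.keys f \<and> (\<forall>m'\<in>Poly_Mapping.keys f. ord m' m)" using m mx by blast
next
  fix m2 assume "m2 \<in> Poly_Mapping.keys f \<and> (\<forall>m'\<in>Poly_Mapping.keys f. ord m' m2)"
  then show "m2 = m" using mo_M(1)[OF mo, of m2 m] f m mx unfolding polyring_iff by blast
qed

lemma finite_max:
  assumes "finite S" "S \<noteq> {}" "\<forall>a\<in>S. \<forall>b\<in>S. ord a b \<or> ord b a"
    and "\<forall>a\<in>S. \<forall>b\<in>S. \<forall>c\<in>S. ord a b \<and> ord b c \<longrightarrow> ord a c"
  shows "\<exists>m\<in>S. \<forall>m'\<in>S. ord m' m"
  using assms
proof (induction S rule: finite_ne_induct)
  case (singleton x)
  then show ?case by blast
next
  case (insert x F)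
  have p1: "\<forall>a\<in>F. \<forall>b\<in>F. ord a b \<or> ord b a" using insert.prems(1) by blast
  have p2: "\<forall>a\<in>F. \<forall>b\<in>F. \<forall>c\<in>F. ord a b \<and> ord b c \<longrightarrow> ord a c" using insert.prems(2) by blast
  obtain m where m: "m \<in> F" "\<forall>m'\<in>F. ord m' m" using insert.IH[OF p1 p2] by blast
  have xx: "ord x x" using insert.prems(1) by blast
  show ?case
  proof (cases "ord x m")
    case True then show ?thesis using m by blast
  next
    case False
    then have mx: "ord m x" using insert.prems(1) m(1) by blast
    have "\<forall>m'\<in>insert x F. ord m' x"
    proof
      fix m' assume "m' \<in> insert x F"
      then show "ord m' x"
      proof
        assume "m' = x" then show ?thesis using xx by simp
      next
        assume mF: "m' \<in> F"
        then have "ord m' m" using m by blast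
        then show ?thesis using insert.prems(2) mx mF m(1) by blast
      qed
    qed
    then show ?thesis by blast
  qed
qed

lemma lead_monom_props:
  assumes mo: "monomial_order n ord" and f: "f \<in> polyring n" and nz: "f \<noteq> 0"
  shows "lead_monom ord f \<in> Poly_Mapping.keys f" "\<forall>m'\<in>Poly_Mapping.keys f. ord m' (lead_monom ord f)"
proof -
  have K: "\<forall>m\<in>Poly_Mapping.keys f. Poly_Mapping.keys m \<subseteq> {0..n}" using f polyring_iff by blast
  obtain m where m: "m \<in> Poly_Mapping.keys f" "\<forall>m'\<in>Poly_Mapping.keys f. ord m' m"
  proof -
    have "finite (Poly_Mapping.keys f)" "Poly_Mapping.keys f \<noteq> {}" using nz by auto
    moreover have "\<forall>a\<in>Poly_Mapping.keys f. \<forall>b\<in>Poly_Mapping.keys f. ord a b \<or> ord b a"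
      using K mo_M(3)[OF mo] by blast
    moreover have "\<forall>a\<in>Poly_Mapping.keys f. \<forall>b\<in>Poly_Mapping.keys f. \<forall>c\<in>Poly_Mapping.keys f. ord a b \<and> ord b c \<longrightarrow> ord a c"
      using K mo_M(2)[OF mo] by blast
    ultimately show ?thesis using finite_max[of "Poly_Mapping.keys f" ord] that by blast
  qed
  then have "lead_monom ord f = m" using lead_monom_eqI[OF mo f] by blast
  then show "lead_monom ord f \<in> Poly_Mapping.keys f" "\<forall>m'\<in>Poly_Mapping.keys f. ord m' (lead_monom ord f)"
    using m by auto
qed



definition restr :: "(monom \<Rightarrow> bool) \<Rightarrow> 'a::zero mpol \<Rightarrow> 'a mpol" where
  "restr P f = Abs_poly_mapping (\<lambda>m. if P m then Poly_Mapping.lookup f m else 0)"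

lemma lookup_restr: "Poly_Mapping.lookup (restr P f) = (\<lambda>m. if P m then Poly_Mapping.lookup f m else 0)"
proof -
  have "finite {m. (if P m then Poly_Mapping.lookup f m else 0) \<noteq> 0}"
  proof (rule rev_finite_subset[OF finite_lookup[of f]])
    show "{m. (if P m then Poly_Mapping.lookup f m else 0) \<noteq> 0} \<subseteq> {k. Poly_Mapping.lookup f k \<noteq> 0}"
    proof
      fix x assume "x \<in> {m. (if P m then Poly_Mapping.lookup f m else 0) \<noteq> 0}"
      then show "x \<in> {k. Poly_Mapping.lookup f k \<noteq> 0}" by (cases "P x") auto
    qed
  qed
  then show ?thesis unfolding restr_def by (rule lookup_Abs_poly_mapping)
qed

lemma keys_restr: "Poly_Mapping.keys (restr P f) = {m\<in>Poly_Mapping.keys f. P m}"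
  by (auto simp: in_keys_iff lookup_restr split: if_splits)

lemma restr_split: "f = restr P f + restr (\<lambda>m. \<not> P m) f"
  by (rule poly_mapping_eqI) (simp add: lookup_add lookup_restr)

lemma restr_poly: "f \<in> polyring n \<Longrightarrow> restr P f \<in> polyring n"
  by (auto simp: polyring_iff keys_restr)

lemma split_vanish:
  fixes f :: "'a::comm_ring_1 mpol"
  assumes f: "f \<in> vanishing_ideal n W" and V: "V \<subseteq> {0..n}"
    and W: "\<forall>v\<in>W. \<forall>i\<in>{0..n}-V. v i = 0"
  shows "restr (\<lambda>m. Poly_Mapping.keys m \<subseteq> V) f \<in> vanishing_ideal n W \<inter> {g. poly_in V g}"
proof -
  let ?P = "\<lambda>m. Poly_Mapping.keys m \<subseteq> V"
  have fp: "f \<in> polyring n" using f by (simp add: vanishing_ideal_def)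
  have "eval (restr ?P f) v = 0" if v: "v \<in> W" for v
  proof -
    have "eval f v = 0" using f v by (simp add: vanishing_ideal_def)
    moreover have "eval (restr (\<lambda>m. \<not> ?P m) f) v = 0"
    proof (rule eval_zero_on, rule ballI)
      fix m assume "m \<in> Poly_Mapping.keys (restr (\<lambda>m. \<not> ?P m) f)"
      then have "m \<in> Poly_Mapping.keys f" "\<not> ?P m" by (auto simp: keys_restr)
      then obtain i where "i \<in> Poly_Mapping.keys m" "i \<notin> V" "i \<in> {0..n}"
        using fp unfolding polyring_iff by blast
      then show "\<exists>i\<in>Poly_Mapping.keys m. v i = 0" using W v by blast
    qed
    ultimately show ?thesis using eval_add[of "restr ?P f" "restr (\<lambda>m. \<not> ?P m) f" v]
      restr_split[of f ?P] by simp
  qed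
  then show ?thesis using restr_poly[OF fp]
    by (auto simp: vanishing_ideal_def poly_in_def keys_restr)
qed

lemma Var_poly: "i \<le> n \<Longrightarrow> (Var i :: 'a::comm_ring_1 mpol) \<in> polyring n"
  by (simp add: Var_def polyring_iff)

lemma single_poly: "Poly_Mapping.keys m \<subseteq> {0..n} \<Longrightarrow> (Poly_Mapping.single m c :: 'a::comm_ring_1 mpol) \<in> polyring n"
  by (simp add: polyring_iff)

lemma Var_mult: "(Var i * Var j :: 'a::comm_ring_1 mpol) = Poly_Mapping.single (Poly_Mapping.single i 1 + Poly_Mapping.single j 1) 1"
  by (simp add: Var_def mult_single)

lemma monom_decomp:
  fixes m :: monom
  assumes "i \<in> Poly_Mapping.keys m" "j \<in> Poly_Mapping.keys m" "i \<noteq> j"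
  shows "m = (m - Poly_Mapping.single i 1 - Poly_Mapping.single j 1) + (Poly_Mapping.single i 1 + Poly_Mapping.single j 1)"
  using assms
  apply (intro poly_mapping_eqI)
  apply (auto simp: lookup_add lookup_minus lookup_single in_keys_iff when_def)
  done

lemma keys_monom_minus: "Poly_Mapping.keys ((m::monom) - a) \<subseteq> Poly_Mapping.keys m"
  by (auto simp: in_keys_iff lookup_minus)



lemma mval_scale: "mval m (\<lambda>i. t * v i) = t ^ mdeg m * mval m v"
  by (simp add: mval_def mdeg_def power_mult_distrib prod.distrib power_sum)

lemma eval_scale_hom:
  assumes "\<forall>m\<in>Poly_Mapping.keys f. mdeg m = d"
  shows "eval f (\<lambda>i. t * v i) = t ^ d * eval f v"
proof -
  have "eval f (\<lambda>i. t * v i) = (\<Sum>m\<in>Poly_Mapping.keys f. t ^ d * (Poly_Mapping.lookup f m * mval m v))"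
    unfolding eval_mval using assms by (intro sum.cong) (auto simp: mval_scale mult_ac)
  also have "\<dots> = t ^ d * eval f v" by (simp add: eval_mval sum_distrib_left)
  finally show ?thesis .
qed

lemma cone:
  fixes Y :: "(nat \<Rightarrow> 'a::field) set"
  assumes Y: "proj_closed n Y" and v: "v \<in> Y" and t: "t \<noteq> 0"
  shows "(\<lambda>i. t * v i) \<in> Y"
proof -
  obtain S where S: "S \<subseteq> polyring n" "\<forall>f\<in>S. homogeneous f" "Y = {v\<in>proj_pts n. \<forall>f\<in>S. eval f v = 0}"
    using Y unfolding proj_closed_def by blast
  have vp: "v \<in> proj_pts n" and vz: "\<forall>f\<in>S. eval f v = 0" using v S(3) by auto
  have "(\<lambda>i. t * v i) \<in> proj_pts n"
  proof -
    obtain i where "v i \<noteq> 0" using vp unfolding proj_pts_def by auto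
    then have "(\<lambda>i. t * v i) \<noteq> (\<lambda>_. 0)" using t by (metis mult_eq_0_iff)
    then show ?thesis using vp unfolding proj_pts_def by auto
  qed
  moreover have "\<forall>f\<in>S. eval f (\<lambda>i. t * v i) = 0"
  proof
    fix f assume f: "f \<in> S"
    then obtain d where "\<forall>m\<in>Poly_Mapping.keys f. mdeg m = d" using S(2) unfolding homogeneous_def by blast
    then have "eval f (\<lambda>i. t * v i) = t ^ d * eval f v" by (rule eval_scale_hom)
    then show "eval f (\<lambda>i. t * v i) = 0" using vz f by simp
  qed
  ultimately show ?thesis using S(3) by blast
qed

lemma mval_single_var:
  assumes "Poly_Mapping.keys m \<subseteq> {l}"
  shows "mval m v = v l ^ Poly_Mapping.lookup m l"
proof (cases "Poly_Mapping.keys m = {}")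
  case True
  then have "m = 0" by simp
  then show ?thesis by (simp add: mval_def)
next
  case False
  then have "Poly_Mapping.keys m = {l}" using assms by blast
  then show ?thesis by (simp add: mval_def)
qed

lemma eval_as_univ:
  fixes g :: "'a::comm_ring_1 mpol"
  assumes g: "g \<in> polyring n" "poly_in V g" and v: "\<forall>j\<in>V. j \<le> n \<longrightarrow> j \<noteq> l \<longrightarrow> v j = 0"
  shows "eval g v = (\<Sum>m\<in>{m\<in>Poly_Mapping.keys g. Poly_Mapping.keys m \<subseteq> {l}}. Poly_Mapping.lookup g m * v l ^ Poly_Mapping.lookup m l)"
proof -
  let ?P = "\<lambda>m. Poly_Mapping.keys m \<subseteq> {l}"
  have z: "eval (restr (\<lambda>m. \<not> ?P m) g) v = 0"
  proof (rule eval_zero_on, rule ballI)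
    fix m assume "m \<in> Poly_Mapping.keys (restr (\<lambda>m. \<not> ?P m) g)"
    then have m: "m \<in> Poly_Mapping.keys g" "\<not> ?P m" by (auto simp: keys_restr)
    then have "Poly_Mapping.keys m \<subseteq> V" "Poly_Mapping.keys m \<subseteq> {0..n}"
      using g unfolding poly_in_def polyring_iff by blast+
    moreover obtain j where j: "j \<in> Poly_Mapping.keys m" "j \<noteq> l" using m(2) by blast
    ultimately have "j \<in> Poly_Mapping.keys m" "j \<in> V" "j \<noteq> l" "j \<le> n" by auto
    then show "\<exists>i\<in>Poly_Mapping.keys m. v i = 0" using v by blast
  qed
  have "eval (restr ?P g) v = (\<Sum>m\<in>{m\<in>Poly_Mapping.keys g. ?P m}. Poly_Mapping.lookup g m * v l ^ Poly_Mapping.lookup m l)"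
    unfolding eval_mval keys_restr by (intro sum.cong) (auto simp: lookup_restr mval_single_var)
  then show ?thesis using eval_add[of "restr ?P g" "restr (\<lambda>m. \<not> ?P m) g" v] restr_split[of g ?P] z
    by simp
qed



lemma Ypart_vanish:
  fixes Y :: "(nat \<Rightarrow> 'a::field_char_0) set"
  assumes Y: "proj_closed n Y" and p: "p \<in> Y" and pa: "p l \<noteq> 0"
    and pz: "\<forall>j\<in>V. j \<le> n \<longrightarrow> j \<noteq> l \<longrightarrow> p j = 0"
    and g: "g \<in> vanishing_ideal n Y" "poly_in V g"
    and v: "\<forall>j\<in>V. j \<le> n \<longrightarrow> j \<noteq> l \<longrightarrow> v j = 0"
  shows "eval g v = 0"
proof -
  have gp: "g \<in> polyring n" using g by (simp add: vanishing_ideal_def)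
  define K where "K = {m\<in>Poly_Mapping.keys g. Poly_Mapping.keys m \<subseteq> {l}}"
  define Q where "Q = (\<Sum>m\<in>K. Polynomial.monom (Poly_Mapping.lookup g m) (Poly_Mapping.lookup m l))"
  have pQ: "poly Q s = (\<Sum>m\<in>K. Poly_Mapping.lookup g m * s ^ Poly_Mapping.lookup m l)" for s
    unfolding Q_def by (simp add: poly_sum poly_monom)
  have ev: "eval g w = poly Q (w l)" if "\<forall>j\<in>V. j \<le> n \<longrightarrow> j \<noteq> l \<longrightarrow> w j = 0" for w
    using eval_as_univ[OF gp g(2) that] pQ unfolding K_def by simp
  have roots: "poly Q s = 0" if s: "s \<noteq> 0" for s
  proof -
    define w where "w = (\<lambda>i. (s / p l) * p i)"
    have "w \<in> Y" unfolding w_def by (rule cone[OF Y p]) (use s pa in simp)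
    then have "eval g w = 0" using g(1) by (simp add: vanishing_ideal_def)
    moreover have "\<forall>j\<in>V. j \<le> n \<longrightarrow> j \<noteq> l \<longrightarrow> w j = 0" using pz unfolding w_def by simp
    moreover have "w l = s" using pa unfolding w_def by simp
    ultimately show ?thesis using ev by metis
  qed
  have "Q = 0"
  proof (rule ccontr)
    assume "Q \<noteq> 0"
    then have "finite {x. poly Q x = 0}" by (rule poly_roots_finite)
    moreover have "UNIV - {0} \<subseteq> {x. poly Q x = 0}" using roots by blast
    ultimately have "finite (UNIV - {0::'a})" by (rule rev_finite_subset)
    then show False using infinite_UNIV_char_0[where 'a='a] by simp
  qed
  then show ?thesis using ev[OF v] by simp
qed



lemma mo_refl: "monomial_order n ord \<Longrightarrow> Poly_Mapping.keys a \<subseteq> {0..n} \<Longrightarrow> ord a a"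
  unfolding monomial_order_def Let_def by blast

lemma gen_poly:
  assumes mo: "monomial_order n ord" and S: "S \<subseteq> polyring n"
  shows "{Poly_Mapping.single (lead_monom ord f) (1::'a::comm_ring_1) | f. f \<in> S \<and> f \<noteq> 0} \<subseteq> polyring n"
proof
  fix x assume "x \<in> {Poly_Mapping.single (lead_monom ord f) (1::'a) | f. f \<in> S \<and> f \<noteq> 0}"
  then obtain f where f: "x = Poly_Mapping.single (lead_monom ord f) 1" "f \<in> S" "f \<noteq> 0" by blast
  then have fp: "f \<in> polyring n" using S by blast
  then have "lead_monom ord f \<in> Poly_Mapping.keys f" using lead_monom_props[OF mo fp f(3)] by blast
  then have "Poly_Mapping.keys (lead_monom ord f) \<subseteq> {0..n}" using fp polyring_iff by blast
  then show "x \<in> polyring n" using f(1) single_poly by blast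
qed

lemma vanishing_poly: "vanishing_ideal n Y \<subseteq> polyring n"
  by (auto simp: vanishing_ideal_def)

lemma keys_ij: "i \<noteq> j \<Longrightarrow> Poly_Mapping.keys (Poly_Mapping.single i (1::nat) + Poly_Mapping.single j 1) = {i, j}"
  by (auto simp: in_keys_iff lookup_add lookup_single when_def split: if_splits)

lemma lead_single: "monomial_order n ord \<Longrightarrow> Poly_Mapping.keys m \<subseteq> {0..n} \<Longrightarrow>
   lead_monom ord (Poly_Mapping.single m (1::'a::comm_ring_1)) = m"
  by (rule lead_monom_eqI) (auto simp: single_poly mo_refl)

theorem lemma3p1:
  fixes Y Z :: "(nat \<Rightarrow> 'a::{alg_closed_field, field_char_0}) set"
    and n l :: nat
    and ord :: "monom \<Rightarrow> monom \<Rightarrow> bool"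
  assumes "0 < l" and "l < n"
    and "proj_closed n Y" and "proj_closed n Z"
    and "\<forall>v\<in>Y. \<forall>i<l. v i = 0"
    and "\<forall>v\<in>Z. \<forall>i. l < i \<and> i \<le> n \<longrightarrow> v i = 0"
    and "Y \<inter> Z \<noteq> {}"
    and "monomial_order n ord"
  shows "initial_ideal n ord (vanishing_ideal n Y \<inter> vanishing_ideal n Z) =
    ideal_sum n
      (ideal_sum n
        (initial_ideal n ord (vanishing_ideal n Y \<inter> {f. poly_in {l..n} f}))
        (initial_ideal n ord (vanishing_ideal n Z \<inter> {f. poly_in {0..l} f})))
      (ideal_prod n (ideal_gen n {Var i | i. i < l}) (ideal_gen n {Var j | j. l < j \<and> j \<le> n}))"
proof -
  note l0 = assms(1) and ln = assms(2) and Yc = assms(3) and Zc = assms(4)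
    and Y0 = assms(5) and Z0 = assms(6) and YZ = assms(7) and mo = assms(8)
  define IY where "IY = vanishing_ideal n Y"
  define IZ where "IZ = vanishing_ideal n Z"
  define GX where "GX = {Poly_Mapping.single (lead_monom ord f) (1::'a) | f. f \<in> IY \<inter> IZ \<and> f \<noteq> 0}"
  define GY where "GY = {Poly_Mapping.single (lead_monom ord f) (1::'a) | f. f \<in> IY \<inter> {f. poly_in {l..n} f} \<and> f \<noteq> 0}"
  define GZ where "GZ = {Poly_Mapping.single (lead_monom ord f) (1::'a) | f. f \<in> IZ \<inter> {f. poly_in {0..l} f} \<and> f \<noteq> 0}"
  define VA where "VA = {Var i :: 'a mpol | i. i < l}"
  define VB where "VB = {Var j :: 'a mpol | j. l < j \<and> j \<le> n}"
  define A' where "A' = ideal_gen n VA"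
  define B' where "B' = ideal_gen n VB"
  define PG where "PG = {a * b | a b. a \<in> A' \<and> b \<in> B'}"
  define LHS where "LHS = ideal_gen n GX"
  define AY where "AY = ideal_gen n GY"
  define BZ where "BZ = ideal_gen n GZ"
  define P where "P = ideal_gen n PG"
  define S1 where "S1 = ideal_gen n (AY \<union> BZ)"
  define RHS where "RHS = ideal_gen n (S1 \<union> P)"

  have IYp: "IY \<subseteq> polyring n" and IZp: "IZ \<subseteq> polyring n"
    unfolding IY_def IZ_def by (rule vanishing_poly)+
  have GXp: "GX \<subseteq> polyring n" unfolding GX_def by (rule gen_poly[OF mo]) (use IYp in blast)
  have GYp: "GY \<subseteq> polyring n" unfolding GY_def by (rule gen_poly[OF mo]) (use IYp in blast)
  have GZp: "GZ \<subseteq> polyring n" unfolding GZ_def by (rule gen_poly[OF mo]) (use IZp in blast)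
  have VAp: "VA \<subseteq> polyring n"
  proof
    fix x assume "x \<in> VA"
    then obtain i where "x = Var i" "i < l" unfolding VA_def by blast
    then show "x \<in> polyring n" using Var_poly[of i n] ln by simp
  qed
  have VBp: "VB \<subseteq> polyring n"
  proof
    fix x assume "x \<in> VB"
    then obtain i where "x = Var i" "i \<le> n" unfolding VB_def by blast
    then show "x \<in> polyring n" using Var_poly[of i n] by simp
  qed
  have A'p: "A' \<subseteq> polyring n" unfolding A'_def by (rule ideal_gen_poly[OF VAp])
  have B'p: "B' \<subseteq> polyring n" unfolding B'_def by (rule ideal_gen_poly[OF VBp])
  have PGp: "PG \<subseteq> polyring n"
  proof
    fix x assume "x \<in> PG"
    then obtain a b where "x = a * b" "a \<in> A'" "b \<in> B'" unfolding PG_def by blast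
    then show "x \<in> polyring n" using A'p B'p polyring_mult[of a n b] by blast
  qed
  have AYp: "AY \<subseteq> polyring n" unfolding AY_def by (rule ideal_gen_poly[OF GYp])
  have BZp: "BZ \<subseteq> polyring n" unfolding BZ_def by (rule ideal_gen_poly[OF GZp])
  have Pp: "P \<subseteq> polyring n" unfolding P_def by (rule ideal_gen_poly[OF PGp])
  have S1p: "S1 \<subseteq> polyring n" unfolding S1_def using AYp BZp by (intro ideal_gen_poly) blast
  have LHSi: "is_ideal n LHS" unfolding LHS_def by (rule ideal_gen_ideal[OF GXp])
  have RHSi: "is_ideal n RHS" unfolding RHS_def using S1p Pp by (intro ideal_gen_ideal) blast

  have GX_LHS: "GX \<subseteq> LHS" unfolding LHS_def by (rule ideal_gen_sub[OF GXp])
  have AY_S1: "AY \<subseteq> S1" and BZ_S1: "BZ \<subseteq> S1"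
    using ideal_gen_sub[of "AY \<union> BZ" n] AYp BZp unfolding S1_def by blast+
  have S1_RHS: "S1 \<subseteq> RHS" and P_RHS: "P \<subseteq> RHS"
    using ideal_gen_sub[of "S1 \<union> P" n] S1p Pp unfolding RHS_def by blast+
  have GY_AY: "GY \<subseteq> AY" unfolding AY_def by (rule ideal_gen_sub[OF GYp])
  have GZ_BZ: "GZ \<subseteq> BZ" unfolding BZ_def by (rule ideal_gen_sub[OF GZp])
  have PG_P: "PG \<subseteq> P" unfolding P_def by (rule ideal_gen_sub[OF PGp])
  have VA_A': "VA \<subseteq> A'" unfolding A'_def by (rule ideal_gen_sub[OF VAp])
  have VB_B': "VB \<subseteq> B'" unfolding B'_def by (rule ideal_gen_sub[OF VBp])

  
  have Ypp: "Y \<subseteq> proj_pts n" using Yc unfolding proj_closed_def by blast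
  obtain p where p: "p \<in> Y" "p \<in> Z" using YZ by blast
  have p0: "\<forall>j. j \<noteq> l \<longrightarrow> p j = 0"
  proof (intro allI impI)
    fix j assume "j \<noteq> l"
    then consider "j < l" | "l < j \<and> j \<le> n" | "n < j" by linarith
    then show "p j = 0"
      using Y0 Z0 p Ypp unfolding proj_pts_def by cases blast+
  qed
  have pl: "p l \<noteq> 0"
  proof
    assume "p l = 0"
    then have "p = (\<lambda>_. 0)" using p0 by auto
    then show False using p Ypp unfolding proj_pts_def by blast
  qed

  have "LHS \<subseteq> RHS"
    unfolding LHS_def
  proof (rule ideal_gen_least[OF RHSi], rule subsetI)
    fix x assume "x \<in> GX"
    then obtain f where f: "x = Poly_Mapping.single (lead_monom ord f) 1" "f \<in> IY" "f \<in> IZ" "f \<noteq> 0"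
      unfolding GX_def by blast
    define m where "m = lead_monom ord f"
    have fp: "f \<in> polyring n" using f IYp by blast
    have mk: "m \<in> Poly_Mapping.keys f" and mmax: "\<forall>m'\<in>Poly_Mapping.keys f. ord m' m"
      using lead_monom_props[OF mo fp f(4)] unfolding m_def by blast+
    have mn: "Poly_Mapping.keys m \<subseteq> {0..n}" using mk fp polyring_iff by blast
    consider "Poly_Mapping.keys m \<subseteq> {l..n}" | "Poly_Mapping.keys m \<subseteq> {0..l}"
      | "\<not> Poly_Mapping.keys m \<subseteq> {l..n} \<and> \<not> Poly_Mapping.keys m \<subseteq> {0..l}" by blast
    then show "x \<in> RHS"
    proof cases
      case 1
      define g where "g = restr (\<lambda>m. Poly_Mapping.keys m \<subseteq> {l..n}) f"
      have g: "g \<in> IY \<inter> {g. poly_in {l..n} g}"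
        unfolding g_def IY_def
        by (rule split_vanish) (use f(2) Y0 in \<open>auto simp: IY_def\<close>)
      have gk: "Poly_Mapping.keys g \<subseteq> Poly_Mapping.keys f" "m \<in> Poly_Mapping.keys g"
        using mk 1 unfolding g_def keys_restr by auto
      have gp: "g \<in> polyring n" using g IYp by blast
      have "lead_monom ord g = m" using lead_monom_eqI[OF mo gp gk(2)] mmax gk(1) by blast
      moreover have "g \<noteq> 0" using gk(2) by auto
      ultimately have "x \<in> GY" using g unfolding GY_def f(1) m_def[symmetric] by blast
      then show ?thesis using GY_AY AY_S1 S1_RHS by blast
    next
      case 2
      define g where "g = restr (\<lambda>m. Poly_Mapping.keys m \<subseteq> {0..l}) f"
      have g: "g \<in> IZ \<inter> {g. poly_in {0..l} g}"
        unfolding g_def IZ_def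
        by (rule split_vanish) (use f(3) Z0 ln in \<open>auto simp: IZ_def\<close>)
      have gk: "Poly_Mapping.keys g \<subseteq> Poly_Mapping.keys f" "m \<in> Poly_Mapping.keys g"
        using mk 2 unfolding g_def keys_restr by auto
      have gp: "g \<in> polyring n" using g IZp by blast
      have "lead_monom ord g = m" using lead_monom_eqI[OF mo gp gk(2)] mmax gk(1) by blast
      moreover have "g \<noteq> 0" using gk(2) by auto
      ultimately have "x \<in> GZ" using g unfolding GZ_def f(1) m_def[symmetric] by blast
      then show ?thesis using GZ_BZ BZ_S1 S1_RHS by blast
    next
      case 3
      then obtain i j where ij: "i \<in> Poly_Mapping.keys m" "i \<notin> {l..n}" "j \<in> Poly_Mapping.keys m" "j \<notin> {0..l}"
        by blast
      have i: "i < l" using ij(1,2) mn by auto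
      have j: "l < j" "j \<le> n" using ij(3,4) mn by auto
      have ne: "i \<noteq> j" using i j by simp
      define r where "r = m - Poly_Mapping.single i 1 - Poly_Mapping.single j 1"
      have "m = r + (Poly_Mapping.single i 1 + Poly_Mapping.single j 1)"
        unfolding r_def by (rule monom_decomp[OF ij(1) ij(3) ne])
      then have x: "x = Poly_Mapping.single r 1 * (Var i * Var j)"
        unfolding f(1) m_def[symmetric] Var_mult by (simp add: mult_single)
      have rp: "Poly_Mapping.single r (1::'a) \<in> polyring n"
        apply (rule single_poly)
        using keys_monom_minus[of "m - Poly_Mapping.single i 1" "Poly_Mapping.single j 1"]
          keys_monom_minus[of m "Poly_Mapping.single i 1"] mn unfolding r_def by blast
      have "Var i \<in> A'" using VA_A' i unfolding VA_def by blast
      moreover have "Var j \<in> B'" using VB_B' j unfolding VB_def by blast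
      ultimately have "Var i * Var j \<in> PG" unfolding PG_def by blast
      then have "Var i * Var j \<in> RHS" using PG_P P_RHS by blast
      then show ?thesis unfolding x using is_ideal_mult[OF RHSi _ rp] by blast
    qed
  qed

  moreover have "RHS \<subseteq> LHS"
    unfolding RHS_def
  proof (rule ideal_gen_least[OF LHSi], rule Un_least)
    have "GY \<subseteq> LHS"
    proof
      fix x assume "x \<in> GY"
      then obtain g where g: "x = Poly_Mapping.single (lead_monom ord g) 1" "g \<in> IY" "poly_in {l..n} g" "g \<noteq> 0"
        unfolding GY_def by blast
      have "g \<in> IZ"
        unfolding IZ_def vanishing_ideal_def
      proof (intro CollectI conjI ballI)
        show "g \<in> polyring n" using g(2) IYp by blast
        fix v assume v: "v \<in> Z"
        show "eval g v = 0"
          by (rule Ypart_vanish[OF Yc p(1) pl, of "{l..n}"]) (use p0 g Z0 v in \<open>auto simp: IY_def\<close>)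
      qed
      then have "x \<in> GX" using g unfolding GX_def by blast
      then show "x \<in> LHS" using GX_LHS by blast
    qed
    moreover have "GZ \<subseteq> LHS"
    proof
      fix x assume "x \<in> GZ"
      then obtain g where g: "x = Poly_Mapping.single (lead_monom ord g) 1" "g \<in> IZ" "poly_in {0..l} g" "g \<noteq> 0"
        unfolding GZ_def by blast
      have "g \<in> IY"
        unfolding IY_def vanishing_ideal_def
      proof (intro CollectI conjI ballI)
        show "g \<in> polyring n" using g(2) IZp by blast
        fix v assume v: "v \<in> Y"
        show "eval g v = 0"
          by (rule Ypart_vanish[OF Zc p(2) pl, of "{0..l}"]) (use p0 g Y0 v in \<open>auto simp: IZ_def\<close>)
      qed
      then have "x \<in> GX" using g unfolding GX_def by blast
      then show "x \<in> LHS" using GX_LHS by blast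
    qed
    ultimately have "AY \<union> BZ \<subseteq> LHS"
      unfolding AY_def BZ_def by (intro Un_least ideal_gen_least[OF LHSi])
    then show "S1 \<subseteq> LHS" unfolding S1_def by (rule ideal_gen_least[OF LHSi])
  next
    have VV: "\<forall>a\<in>VA. \<forall>b\<in>VB. a * b \<in> LHS"
    proof (intro ballI)
      fix a b assume "a \<in> VA" "b \<in> VB"
      then obtain i j where ij: "a = Var i" "b = Var j" "i < l" "l < j" "j \<le> n"
        unfolding VA_def VB_def by blast
      define e where "e = Poly_Mapping.single i (1::nat) + Poly_Mapping.single j 1"
      have ne: "i \<noteq> j" using ij by simp
      have ke: "Poly_Mapping.keys e = {i, j}" unfolding e_def by (rule keys_ij[OF ne])
      have en: "Poly_Mapping.keys e \<subseteq> {0..n}" using ke ij ln by auto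
      define f where "f = (Poly_Mapping.single e 1 :: 'a mpol)"
      have fp: "f \<in> polyring n" unfolding f_def by (rule single_poly[OF en])
      have fY: "f \<in> IY" unfolding IY_def vanishing_ideal_def
      proof (intro CollectI conjI ballI fp)
        fix v assume "v \<in> Y"
        then have "v i = 0" using Y0 ij by blast
        then show "eval f v = 0" unfolding f_def eval_single using mval_zero[of i e v] ke by simp
      qed
      have fZ: "f \<in> IZ" unfolding IZ_def vanishing_ideal_def
      proof (intro CollectI conjI ballI fp)
        fix v assume "v \<in> Z"
        then have "v j = 0" using Z0 ij by blast
        then show "eval f v = 0" unfolding f_def eval_single using mval_zero[of j e v] ke by simp
      qed
      have "f \<noteq> 0" unfolding f_def by (metis keys_single keys_zero one_neq_zero singletonI empty_iff)
      moreover have "lead_monom ord f = e" unfolding f_def by (rule lead_single[OF mo en])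
      ultimately have "Poly_Mapping.single e 1 \<in> GX" using fY fZ unfolding GX_def by force
      moreover have "a * b = Poly_Mapping.single e 1" unfolding ij e_def by (rule Var_mult)
      ultimately show "a * b \<in> LHS" using GX_LHS by auto
    qed
    have "PG \<subseteq> LHS"
    proof
      fix x assume "x \<in> PG"
      then obtain a b where "x = a * b" "a \<in> A'" "b \<in> B'" unfolding PG_def by blast
      then show "x \<in> LHS" using ideal_gen_prod[OF LHSi VAp VBp VV] unfolding A'_def B'_def by blast
    qed
    then show "P \<subseteq> LHS" unfolding P_def by (rule ideal_gen_least[OF LHSi])
  qed
  ultimately have "LHS = RHS" by blast
  then show ?thesis
    unfolding LHS_def RHS_def S1_def P_def AY_def BZ_def GX_def GY_def GZ_def PG_def A'_def B'_def
      VA_def VB_def IY_def IZ_def initial_ideal_def ideal_sum_def ideal_prod_def .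
qed

end
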